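(* For every integer $p\ge1$ and every $s\in\mathbb{C}^k$, $$\nabla A(s)^p-A(s)^p\nabla+pA(s)^{p-1}=(-1)^{k-1}\partial_{s_k}\big(A(s)^p\big)\,P'_s(A(s)).$$
   Context: Fix an integer $k\ge 2$, coordinates $s=(s_1,\dots,s_k)$ on $\mathbb{C}^k$, $s_0:=1$, $P_s(z):=\sum_{h=0}^k(-1)^hs_hz^{k-h}$. $A(s)$ is the $(k,k)$ companion matrix with $A_{i,i+1}=1$ for $i\in[1,k-1]$, last row $A_{k,j}=(-1)^{k-j}s_{k+1-j}$ for $j\in[1,k]$, all other entries $0$. $P'_s(A(s)):=\sum_{h=0}^{k-1}(-1)^h(k-h)s_hA(s)^{k-h-1}$. $\nabla$ is the constant $(k,k)$ matrix with $\nabla_{i+1,i}=i$ for $i\in[1,k-1]$ and all other entries $0$. *)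

theory Defs
  imports "HOL-Analysis.Analysis" "Jordan_Normal_Form.Matrix"
begin

(* Matrices are 0-indexed in Jordan_Normal_Form: entry (i,j) here is entry (i+1,j+1) of the paper.
   Coordinates s_1..s_k are s 1 .. s k of a function s :: nat => complex; s_0 := 1. *)

definition scoord :: "(nat \<Rightarrow> complex) \<Rightarrow> nat \<Rightarrow> complex" where
  "scoord s h = (if h = 0 then 1 else s h)"

definition companion :: "nat \<Rightarrow> (nat \<Rightarrow> complex) \<Rightarrow> complex mat" where
  "companion k s = mat k k (\<lambda>(i,j).
     if i = k - 1 then (-1) ^ (k - 1 - j) * s (k - j)
     else if j = i + 1 then 1 else 0)"

definition nabla :: "nat \<Rightarrow> complex mat" where
  "nabla k = mat k k (\<lambda>(i,j). if i = j + 1 then of_nat (j + 1) else 0)"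

definition Pderiv_at_A :: "nat \<Rightarrow> (nat \<Rightarrow> complex) \<Rightarrow> complex mat" where
  "Pderiv_at_A k s = mat k k (\<lambda>(i,j).
     \<Sum>h<k. (-1) ^ h * of_nat (k - h) * scoord s h * (companion k s ^\<^sub>m (k - h - 1)) $$ (i,j))"

definition dsk_pow :: "nat \<Rightarrow> nat \<Rightarrow> (nat \<Rightarrow> complex) \<Rightarrow> complex mat" where
  "dsk_pow k p s = mat k k (\<lambda>(i,j).
     deriv (\<lambda>t. (companion k (s(k := t)) ^\<^sub>m p) $$ (i,j)) (s k))"

end

theory Submission imports Defs begin

lemma compC[simp]: "companion k s \<in> carrier_mat k k"
  by (simp add: companion_def)
lemma comp_dim[simp]: "dim_row (companion k s) = k" "dim_col (companion k s) = k"
  by (simp_all add: companion_def)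
lemma nablaC[simp]: "nabla k \<in> carrier_mat k k"
  by (simp add: nabla_def)
lemma PC[simp]: "Pderiv_at_A k s \<in> carrier_mat k k"
  by (simp add: Pderiv_at_A_def)
lemma dskC[simp]: "dsk_pow k p s \<in> carrier_mat k k"
  by (simp add: dsk_pow_def)

lemma comp_idx: "i < k \<Longrightarrow> j < k \<Longrightarrow> companion k s $$ (i,j) =
   (if i = k - 1 then (-1) ^ (k - 1 - j) * s (k - j) else if j = i + 1 then 1 else 0)"
  by (simp add: companion_def)

lemma pow_comm: fixes A :: "'a::semiring_1 mat" assumes "A \<in> carrier_mat n n"
  shows "A * A ^\<^sub>m m = A ^\<^sub>m m * A"
proof (induction m)
  case 0 then show ?case using assms by simp
next
  case (Suc m)
  have "A * A ^\<^sub>m Suc m = (A * A ^\<^sub>m m) * A" using assms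
    by (simp del: assoc_mult_mat add: assoc_mult_mat[of A n n "A ^\<^sub>m m" n A n, symmetric])
  also have "\<dots> = A ^\<^sub>m Suc m * A" using Suc assms by simp
  finally show ?case .
qed

lemma sum_single: "finite S \<Longrightarrow> a \<in> S \<Longrightarrow> (\<And>x. x \<in> S \<Longrightarrow> x \<noteq> a \<Longrightarrow> f x = 0) \<Longrightarrow> sum f S = f a"
  by (metis sum.remove add.right_neutral sum.neutral DiffE singletonI)

lemma row0: assumes "m < k" "j < k"
  shows "(companion k s ^\<^sub>m m) $$ (0,j) = (if j = m then 1 else 0)"
  using assms
proof (induction m arbitrary: j)
  case 0 then show ?case by (simp add: carrier_matD)
next
  case (Suc m)
  have "(companion k s ^\<^sub>m Suc m) $$ (0,j) = (\<Sum>l<k. (companion k s ^\<^sub>m m) $$ (0,l) * companion k s $$ (l,j))"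
    using Suc.prems by (simp add: scalar_prod_def atLeast0LessThan)
  also have "\<dots> = (companion k s ^\<^sub>m m) $$ (0,m) * companion k s $$ (m,j)"
    by (rule sum_single) (use Suc in auto)
  also have "\<dots> = (if j = Suc m then 1 else 0)" using Suc by (simp add: comp_idx)
  finally show ?case .
qed

definition Emat :: "nat \<Rightarrow> complex mat" where
  "Emat k = mat k k (\<lambda>(i,j). if i = k - 1 \<and> j = 0 then (-1) ^ (k - 1) else 0)"

lemma EmatC[simp]: "Emat k \<in> carrier_mat k k" by (simp add: Emat_def)
lemma Emat_dim[simp]: "dim_row (Emat k) = k" "dim_col (Emat k) = k" by (simp_all add: Emat_def)
lemma P_dim[simp]: "dim_row (Pderiv_at_A k s) = k" "dim_col (Pderiv_at_A k s) = k" by (simp_all add: Pderiv_at_A_def)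
lemma nabla_dim[simp]: "dim_row (nabla k) = k" "dim_col (nabla k) = k" by (simp_all add: nabla_def)

lemma P_row0: assumes "k \<ge> 2" "j < k"
  shows "Pderiv_at_A k s $$ (0,j) = (-1) ^ (k - 1 - j) * of_nat (j + 1) * scoord s (k - 1 - j)"
proof -
  have "Pderiv_at_A k s $$ (0,j) = (\<Sum>h<k. (-1) ^ h * of_nat (k - h) * scoord s h * (companion k s ^\<^sub>m (k - h - 1)) $$ (0,j))"
    using assms by (simp add: Pderiv_at_A_def)
  also have "\<dots> = (-1) ^ (k - 1 - j) * of_nat (k - (k - 1 - j)) * scoord s (k - 1 - j) * (companion k s ^\<^sub>m (k - (k - 1 - j) - 1)) $$ (0,j)"
    by (rule sum_single) (use assms in \<open>auto simp: row0\<close>)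
  also have "\<dots> = (-1) ^ (k - 1 - j) * of_nat (j + 1) * scoord s (k - 1 - j)"
    using assms by (simp add: row0 Suc_diff_Suc)
  finally show ?thesis .
qed

lemma NA_idx: assumes "i < k" "j < k"
  shows "(nabla k * companion k s) $$ (i,j) = (if i = 0 then 0 else of_nat i * companion k s $$ (i - 1, j))"
proof -
  have "(nabla k * companion k s) $$ (i,j) = (\<Sum>l<k. nabla k $$ (i,l) * companion k s $$ (l,j))"
    using assms by (simp add: scalar_prod_def atLeast0LessThan nabla_def)
  also have "\<dots> = (if i = 0 then 0 else of_nat i * companion k s $$ (i - 1, j))"
  proof (cases "i = 0")
    case True then show ?thesis using assms by (simp add: nabla_def)
  next
    case False
    have "(\<Sum>l<k. nabla k $$ (i,l) * companion k s $$ (l,j)) = nabla k $$ (i,i-1) * companion k s $$ (i-1,j)"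
      by (rule sum_single) (use assms False in \<open>auto simp: nabla_def\<close>)
    then show ?thesis using assms False by (simp add: nabla_def)
  qed
  finally show ?thesis .
qed

lemma AN_idx: assumes "i < k" "j < k"
  shows "(companion k s * nabla k) $$ (i,j) = (if j + 1 < k then of_nat (j + 1) * companion k s $$ (i, j + 1) else 0)"
proof -
  have "(companion k s * nabla k) $$ (i,j) = (\<Sum>l<k. companion k s $$ (i,l) * nabla k $$ (l,j))"
    using assms by (simp add: scalar_prod_def atLeast0LessThan nabla_def)
  also have "\<dots> = (if j + 1 < k then of_nat (j + 1) * companion k s $$ (i, j + 1) else 0)"
  proof (cases "j + 1 < k")
    case False then show ?thesis using assms by (simp add: nabla_def)
  next
    case True
    have "(\<Sum>l<k. companion k s $$ (i,l) * nabla k $$ (l,j)) = companion k s $$ (i,j+1) * nabla k $$ (j+1,j)"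
      by (rule sum_single) (use assms True in \<open>auto simp: nabla_def\<close>)
    then show ?thesis using assms True by (simp add: nabla_def)
  qed
  finally show ?thesis .
qed

lemma EP_idx: assumes "k \<ge> 2" "i < k" "j < k"
  shows "((-1) ^ (k - 1) \<cdot>\<^sub>m (Emat k * Pderiv_at_A k s)) $$ (i,j) = (if i = k - 1 then Pderiv_at_A k s $$ (0,j) else 0)"
proof -
  have "(Emat k * Pderiv_at_A k s) $$ (i,j) = (\<Sum>l<k. Emat k $$ (i,l) * Pderiv_at_A k s $$ (l,j))"
    using assms by (simp add: scalar_prod_def atLeast0LessThan Emat_def Pderiv_at_A_def)
  also have "\<dots> = Emat k $$ (i,0) * Pderiv_at_A k s $$ (0,j)"
    by (rule sum_single) (use assms in \<open>auto simp: Emat_def\<close>)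
  finally have X: "(Emat k * Pderiv_at_A k s) $$ (i,j) = Emat k $$ (i,0) * Pderiv_at_A k s $$ (0,j)" .
  have "((-1) ^ (k - 1) \<cdot>\<^sub>m (Emat k * Pderiv_at_A k s)) $$ (i,j) = (-1) ^ (k - 1) * (Emat k * Pderiv_at_A k s) $$ (i,j)"
    using assms by simp
  also have "\<dots> = (-1) ^ (k - 1) * (Emat k $$ (i,0) * Pderiv_at_A k s $$ (0,j))" by (simp only: X)
  also have "\<dots> = (if i = k - 1 then Pderiv_at_A k s $$ (0,j) else 0)"
    using assms by (simp add: Emat_def flip: power_add)
  finally show ?thesis .
qed

lemma key: assumes "k \<ge> 2"
  shows "(-1) ^ (k - 1) \<cdot>\<^sub>m (Emat k * Pderiv_at_A k s) = nabla k * companion k s - companion k s * nabla k + 1\<^sub>m k"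
proof (rule eq_matI)
  fix i j assume ij: "i < dim_row (nabla k * companion k s - companion k s * nabla k + 1\<^sub>m k)"
     "j < dim_col (nabla k * companion k s - companion k s * nabla k + 1\<^sub>m k)"
  then have i: "i < k" and j: "j < k" by auto
  have r: "(nabla k * companion k s - companion k s * nabla k + 1\<^sub>m k) $$ (i,j) =
     (nabla k * companion k s) $$ (i,j) - (companion k s * nabla k) $$ (i,j) + (if i = j then 1 else 0)"
    using i j by (simp add: nabla_def)
  show "((-1) ^ (k - 1) \<cdot>\<^sub>m (Emat k * Pderiv_at_A k s)) $$ (i,j) = (nabla k * companion k s - companion k s * nabla k + 1\<^sub>m k) $$ (i,j)"
    unfolding r EP_idx[OF assms i j] NA_idx[OF i j] AN_idx[OF i j]
  proof (cases "i = k - 1")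
    case False
    then show "(if i = k - 1 then Pderiv_at_A k s $$ (0, j) else 0) =
     (if i = 0 then 0 else of_nat i * companion k s $$ (i - 1, j)) -
     (if j + 1 < k then of_nat (j + 1) * companion k s $$ (i, j + 1) else 0) +
     (if i = j then 1 else 0)" using i j assms by (auto simp: comp_idx)
  next
    case True
    show "(if i = k - 1 then Pderiv_at_A k s $$ (0, j) else 0) =
     (if i = 0 then 0 else of_nat i * companion k s $$ (i - 1, j)) -
     (if j + 1 < k then of_nat (j + 1) * companion k s $$ (i, j + 1) else 0) +
     (if i = j then 1 else 0)"
    proof (cases "j = k - 1")
      case True
      obtain m where m: "k = Suc (Suc m)" using assms by (metis add_2_eq_Suc le_Suc_ex)
      then show ?thesis using True \<open>i = k - 1\<close> i j assms by (simp add: comp_idx P_row0 scoord_def)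
    next
      case False
      then have jj: "j + 1 < k" using j by auto
      have e: "k - 1 - j = Suc (k - 1 - (j + 1))" using jj by auto
      have e2: "k - (j + 1) = k - 1 - j" by auto
      obtain m where m: "k = Suc (Suc m)" using assms by (metis add_2_eq_Suc le_Suc_ex)
      have e3: "Suc m - j = Suc (m - j)" using jj m by auto
      show ?thesis using \<open>i = k - 1\<close> i j jj assms False
        by (simp add: comp_idx P_row0 scoord_def m e3)
    qed
  qed
qed (auto simp: Emat_def)

lemma comb_left: fixes A :: "complex mat" assumes "A \<in> carrier_mat k k" "\<And>h. h < k \<Longrightarrow> B h \<in> carrier_mat k k" "i < k" "j < k"
  shows "(A * mat k k (\<lambda>(i,j). \<Sum>h<k. c h * B h $$ (i,j))) $$ (i,j) = (\<Sum>h<k. c h * (A * B h) $$ (i,j))"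
proof -
  have "(A * mat k k (\<lambda>(i,j). \<Sum>h<k. c h * B h $$ (i,j))) $$ (i,j) = (\<Sum>l<k. A $$ (i,l) * (\<Sum>h<k. c h * B h $$ (l,j)))"
    using assms by (simp add: scalar_prod_def atLeast0LessThan)
  also have "\<dots> = (\<Sum>h<k. c h * (\<Sum>l<k. A $$ (i,l) * B h $$ (l,j)))"
    unfolding sum_distrib_left by (subst sum.swap) (simp add: mult_ac)
  also have "\<dots> = (\<Sum>h<k. c h * (A * B h) $$ (i,j))"
  proof (rule sum.cong[OF refl])
    fix h assume "h \<in> {..<k}"
    then have "B h \<in> carrier_mat k k" using assms(2) by simp
    then show "c h * (\<Sum>l<k. A $$ (i,l) * B h $$ (l,j)) = c h * (A * B h) $$ (i,j)"
      using assms by (simp add: scalar_prod_def atLeast0LessThan)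
  qed
  finally show ?thesis .
qed

lemma comb_right: fixes A :: "complex mat" assumes "A \<in> carrier_mat k k" "\<And>h. h < k \<Longrightarrow> B h \<in> carrier_mat k k" "i < k" "j < k"
  shows "(mat k k (\<lambda>(i,j). \<Sum>h<k. c h * B h $$ (i,j)) * A) $$ (i,j) = (\<Sum>h<k. c h * (B h * A) $$ (i,j))"
proof -
  have "(mat k k (\<lambda>(i,j). \<Sum>h<k. c h * B h $$ (i,j)) * A) $$ (i,j) = (\<Sum>l<k. (\<Sum>h<k. c h * B h $$ (i,l)) * A $$ (l,j))"
    using assms by (simp add: scalar_prod_def atLeast0LessThan)
  also have "\<dots> = (\<Sum>h<k. c h * (\<Sum>l<k. B h $$ (i,l) * A $$ (l,j)))"
    unfolding sum_distrib_left sum_distrib_right by (subst sum.swap) (simp add: mult_ac)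
  also have "\<dots> = (\<Sum>h<k. c h * (B h * A) $$ (i,j))"
  proof (rule sum.cong[OF refl])
    fix h assume "h \<in> {..<k}"
    then have "B h \<in> carrier_mat k k" using assms(2) by simp
    then show "c h * (\<Sum>l<k. B h $$ (i,l) * A $$ (l,j)) = c h * (B h * A) $$ (i,j)"
      using assms by (simp add: scalar_prod_def atLeast0LessThan)
  qed
  finally show ?thesis .
qed

lemma AP_comm: "companion k s * Pderiv_at_A k s = Pderiv_at_A k s * companion k s"
proof (rule eq_matI)
  fix i j assume "i < dim_row (Pderiv_at_A k s * companion k s)" "j < dim_col (Pderiv_at_A k s * companion k s)"
  then have i: "i < k" and j: "j < k" by auto
  let ?c = "\<lambda>h. (-1) ^ h * of_nat (k - h) * scoord s h"
  let ?B = "\<lambda>h. companion k s ^\<^sub>m (k - h - 1)"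
  have P: "Pderiv_at_A k s = mat k k (\<lambda>(i,j). \<Sum>h<k. ?c h * ?B h $$ (i,j))"
    by (simp add: Pderiv_at_A_def)
  show "(companion k s * Pderiv_at_A k s) $$ (i,j) = (Pderiv_at_A k s * companion k s) $$ (i,j)"
    unfolding P comb_left[OF compC _ i j, of ?B, OF pow_carrier_mat[OF compC]]
      comb_right[OF compC _ i j, of ?B, OF pow_carrier_mat[OF compC]]
    by (simp add: pow_comm[OF compC])
qed auto

fun Dm :: "nat \<Rightarrow> (nat \<Rightarrow> complex) \<Rightarrow> nat \<Rightarrow> complex mat" where
  "Dm k s 0 = 0\<^sub>m k k"
| "Dm k s (Suc p) = Dm k s p * companion k s + companion k s ^\<^sub>m p * Emat k"

lemma DmC[simp]: "Dm k s p \<in> carrier_mat k k"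
  by (induction p) auto
lemma Dm_dim[simp]: "dim_row (Dm k s p) = k" "dim_col (Dm k s p) = k"
  using carrier_matD[OF DmC[of k s p]] by auto

lemma comp_deriv: assumes "k \<ge> 2" "l < k" "j < k"
  shows "((\<lambda>t. companion k (s(k := t)) $$ (l,j)) has_field_derivative Emat k $$ (l,j)) (at (s k))"
proof (cases "l = k - 1 \<and> j = 0")
  case True
  have "(\<lambda>t. companion k (s(k := t)) $$ (l,j)) = (\<lambda>t. (-1) ^ (k - 1) * t)"
    using True assms by (auto simp: comp_idx)
  moreover have "Emat k $$ (l,j) = (-1) ^ (k - 1) * 1" using True assms by (simp add: Emat_def)
  moreover have "((\<lambda>t. (-1) ^ (k - 1) * t) has_field_derivative (-1) ^ (k - 1) * 1) (at (s k))"
    by (rule DERIV_cmult[OF DERIV_ident])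
  ultimately show ?thesis by simp
next
  case False
  have hk: "0 < j \<Longrightarrow> k - j \<noteq> k" using assms by arith
  have "(\<lambda>t. companion k (s(k := t)) $$ (l,j)) = (\<lambda>t. companion k s $$ (l,j))"
    using False assms hk by (auto simp: comp_idx)
  moreover have "Emat k $$ (l,j) = 0" using False assms by (auto simp: Emat_def)
  ultimately show ?thesis by simp
qed

lemma pow_deriv: assumes "k \<ge> 2" "i < k" "j < k"
  shows "((\<lambda>t. (companion k (s(k := t)) ^\<^sub>m p) $$ (i,j)) has_field_derivative Dm k s p $$ (i,j)) (at (s k))"
  using assms(2,3)
proof (induction p arbitrary: j)
  case 0
  then show ?case by simp
next
  case (Suc p)
  have e: "(\<lambda>t. (companion k (s(k := t)) ^\<^sub>m Suc p) $$ (i,j)) =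
     (\<lambda>t. \<Sum>l<k. (companion k (s(k := t)) ^\<^sub>m p) $$ (i,l) * companion k (s(k := t)) $$ (l,j))"
    using Suc.prems by (auto simp: scalar_prod_def atLeast0LessThan)
  have d: "Dm k s (Suc p) $$ (i,j) = (\<Sum>l<k. Dm k s p $$ (i,l) * companion k s $$ (l,j) +
      (companion k s ^\<^sub>m p) $$ (i,l) * Emat k $$ (l,j))"
    using Suc.prems by (simp add: scalar_prod_def atLeast0LessThan sum.distrib)
  have "((\<lambda>t. \<Sum>l<k. (companion k (s(k := t)) ^\<^sub>m p) $$ (i,l) * companion k (s(k := t)) $$ (l,j))
     has_field_derivative (\<Sum>l<k. Dm k s p $$ (i,l) * companion k (s(k := s k)) $$ (l,j) +
      (companion k (s(k := s k)) ^\<^sub>m p) $$ (i,l) * Emat k $$ (l,j))) (at (s k))"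
  proof (rule DERIV_sum)
    fix l assume l: "l \<in> {..<k}"
    then have l': "l < k" by simp
    show "((\<lambda>t. (companion k (s(k := t)) ^\<^sub>m p) $$ (i,l) * companion k (s(k := t)) $$ (l,j))
     has_field_derivative (Dm k s p $$ (i,l) * companion k (s(k := s k)) $$ (l,j) +
      (companion k (s(k := s k)) ^\<^sub>m p) $$ (i,l) * Emat k $$ (l,j))) (at (s k))"
      using DERIV_mult[OF Suc.IH[OF assms(2) l'] comp_deriv[OF assms(1) l' Suc.prems(2), of s]]
      unfolding fun_upd_triv by (simp only: mult.commute[of "Emat k $$ (l,j)"])
  qed
  then show ?case unfolding e d by simp
qed

lemma dsk_Dm: assumes "k \<ge> 2" shows "dsk_pow k p s = Dm k s p"
proof (rule eq_matI)
  fix i j assume "i < dim_row (Dm k s p)" "j < dim_col (Dm k s p)"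
  then have i: "i < k" and j: "j < k" by auto
  show "dsk_pow k p s $$ (i,j) = Dm k s p $$ (i,j)"
    unfolding dsk_pow_def using i j by (simp add: DERIV_imp_deriv[OF pow_deriv[OF assms i j]])
qed (simp_all add: dsk_pow_def)

lemma d1: fixes X :: "complex mat"
  assumes "X \<in> carrier_mat n n" "Y \<in> carrier_mat n n" "Z \<in> carrier_mat n n" "B \<in> carrier_mat n n"
  shows "(X - Y + Z) * B = X * B - Y * B + Z * B"
proof -
  have "(X - Y + Z) * B = (X - Y) * B + Z * B"
    by (rule add_mult_distrib_mat[OF minus_carrier_mat[OF assms(2)]]) (use assms in auto)
  also have "(X - Y) * B = X * B - Y * B"
    by (rule minus_mult_distrib_mat) (use assms in auto)
  finally show ?thesis .
qed

lemma d2: fixes X :: "complex mat"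
  assumes "X \<in> carrier_mat n n" "Y \<in> carrier_mat n n" "Z \<in> carrier_mat n n" "B \<in> carrier_mat n n"
  shows "B * (X - Y + Z) = B * X - B * Y + B * Z"
proof -
  have "B * (X - Y + Z) = B * (X - Y) + B * Z"
    by (rule mult_add_distrib_mat[of _ n n]) (use assms in auto)
  also have "B * (X - Y) = B * X - B * Y"
    by (rule mult_minus_distrib_mat) (use assms in auto)
  finally show ?thesis .
qed

lemma final_eq: fixes N W A Q :: "complex mat"
  assumes c: "N \<in> carrier_mat k k" "W \<in> carrier_mat k k" "A \<in> carrier_mat k k" "Q \<in> carrier_mat k k"
    and W: "Q * A = W"
  shows "(N * W - W * N + of_nat (Suc q) \<cdot>\<^sub>m Q) * A + W * (N * A - A * N + 1\<^sub>m k)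
       = N * (W * A) - (W * A) * N + of_nat (Suc (Suc q)) \<cdot>\<^sub>m W"
proof -
  have "(N * W - W * N + of_nat (Suc q) \<cdot>\<^sub>m Q) * A = N * W * A - W * N * A + (of_nat (Suc q) \<cdot>\<^sub>m Q) * A"
    by (rule d1) (use c in auto)
  also have "\<dots> = N * (W * A) - W * (N * A) + of_nat (Suc q) \<cdot>\<^sub>m W"
    using c W by (simp add: mult_smult_assoc_mat[of Q k k A k])
  finally have 1: "(N * W - W * N + of_nat (Suc q) \<cdot>\<^sub>m Q) * A = N * (W * A) - W * (N * A) + of_nat (Suc q) \<cdot>\<^sub>m W" .
  have "W * (N * A - A * N + 1\<^sub>m k) = W * (N * A) - W * (A * N) + W * 1\<^sub>m k"
    by (rule d2) (use c in auto)
  also have "\<dots> = W * (N * A) - (W * A) * N + W" using c by simp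
  finally have 2: "W * (N * A - A * N + 1\<^sub>m k) = W * (N * A) - (W * A) * N + W" .
  show ?thesis unfolding 1 2
    by (rule eq_matI) (use c in \<open>auto simp del: index_mult_mat(1) simp: algebra_simps\<close>)
qed

lemma Dm1: "Dm k s (Suc 0) = Emat k"
  by simp

theorem mainTheorem9:
  fixes k p :: nat and s :: "nat \<Rightarrow> complex"
  assumes "k \<ge> 2" and "p \<ge> 1"
  shows "nabla k * companion k s ^\<^sub>m p - companion k s ^\<^sub>m p * nabla k
           + of_nat p \<cdot>\<^sub>m companion k s ^\<^sub>m (p - 1)
         = (-1) ^ (k - 1) \<cdot>\<^sub>m (dsk_pow k p s * Pderiv_at_A k s)"
proof -
  let ?A = "companion k s" and ?N = "nabla k" and ?P = "Pderiv_at_A k s" and ?c = "(-1) ^ (k - 1) :: complex"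
  have L: "?N * ?A ^\<^sub>m Suc q - ?A ^\<^sub>m Suc q * ?N + of_nat (Suc q) \<cdot>\<^sub>m ?A ^\<^sub>m q
        = ?c \<cdot>\<^sub>m (Dm k s (Suc q) * ?P)" for q
  proof (induction q)
    case 0
    have "1 \<cdot>\<^sub>m 1\<^sub>m k = (1\<^sub>m k :: complex mat)" by (rule eq_matI) auto
    then show ?case using key[OF assms(1), of s] by (simp add: Dm1)
  next
    case (Suc q)
    let ?W = "?A ^\<^sub>m Suc q"
    have cW: "?W \<in> carrier_mat k k" by (rule pow_carrier_mat[OF compC])
    have "?c \<cdot>\<^sub>m (Dm k s (Suc (Suc q)) * ?P) = ?c \<cdot>\<^sub>m ((Dm k s (Suc q) * ?A + ?W * Emat k) * ?P)"
      by simp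
    also have "(Dm k s (Suc q) * ?A + ?W * Emat k) * ?P = Dm k s (Suc q) * ?A * ?P + ?W * Emat k * ?P"
      by (rule add_mult_distrib_mat[of _ k k]) auto
    also have "Dm k s (Suc q) * ?A * ?P = (Dm k s (Suc q) * ?P) * ?A"
      by (simp only: assoc_mult_mat[OF DmC compC PC] assoc_mult_mat[OF DmC PC compC] AP_comm)
    also have "?W * Emat k * ?P = ?W * (Emat k * ?P)" by (rule assoc_mult_mat[OF cW EmatC PC])
    also have "?c \<cdot>\<^sub>m ((Dm k s (Suc q) * ?P) * ?A + ?W * (Emat k * ?P))
       = (?c \<cdot>\<^sub>m (Dm k s (Suc q) * ?P)) * ?A + ?W * (?c \<cdot>\<^sub>m (Emat k * ?P))"
    proof -
      have c1: "Dm k s (Suc q) * ?P \<in> carrier_mat k k" by (rule mult_carrier_mat[OF DmC PC])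
      have c2: "Emat k * ?P \<in> carrier_mat k k" by (rule mult_carrier_mat[OF EmatC PC])
      show ?thesis
        by (simp only: add_smult_distrib_left_mat[OF mult_carrier_mat[OF c1 compC] mult_carrier_mat[OF cW c2]]
          mult_smult_assoc_mat[OF c1 compC] mult_smult_distrib[OF cW c2])
    qed
    also have "\<dots> = (?N * ?W - ?W * ?N + of_nat (Suc q) \<cdot>\<^sub>m ?A ^\<^sub>m q) * ?A + ?W * (?N * ?A - ?A * ?N + 1\<^sub>m k)"
      unfolding Suc.IH key[OF assms(1)] ..
    also have "\<dots> = ?N * (?W * ?A) - (?W * ?A) * ?N + of_nat (Suc (Suc q)) \<cdot>\<^sub>m ?W"
      by (rule final_eq) auto
    finally show ?case by simp
  qed
  obtain q where q: "p = Suc q" using assms(2) by (cases p) auto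
  show ?thesis using L[of q] unfolding q dsk_Dm[OF assms(1)] by simp
qed

end
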